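(* Let $A$ and $B$ be rings, $f: A\to B$ a ring homomorphism and $J$ a proper ideal of $B$ such that $J\subseteq\mathrm{nil}(B)$. Then $A\bowtie^{f}J$ is a weak Armendariz ring if and only if $A$ is a weak Armendariz ring.
   Context: All rings are associative with identity (not necessarily commutative), ring homomorphisms are unital, and ideals are two-sided. $\mathrm{nil}(R)$ denotes the set of nilpotent elements of a ring $R$. For a ring homomorphism $f:A\to B$ and an ideal $J$ of $B$, the amalgamation is the subring $A\bowtie^{f}J=\{(a,f(a)+j)\mid a\in A,\ j\in J\}$ of $A\times B$. A ring $R$ is weak Armendariz if whenever $p(x)=\sum_{i=0}^n a_ix^i$ and $q(x)=\sum_{j=0}^m b_jx^j$ in $R[x]$ satisfy $p(x)q(x)=0$, then $a_ib_j\in\mathrm{nil}(R)$ for all $i,j$. *)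

theory Defs
  imports "HOL-Algebra.UnivPoly" "HOL-Algebra.Chinese_Remainder"
begin

definition nil_set :: "('a, 'm) ring_scheme \<Rightarrow> 'a set" where
  "nil_set R = {x \<in> carrier R. \<exists>n::nat. x [^]\<^bsub>R\<^esub> n = \<zero>\<^bsub>R\<^esub>}"

definition weak_armendariz :: "('a, 'm) ring_scheme \<Rightarrow> bool" where
  "weak_armendariz R \<longleftrightarrow>
     (\<forall>p \<in> carrier (UP R). \<forall>q \<in> carrier (UP R).
        p \<otimes>\<^bsub>UP R\<^esub> q = \<zero>\<^bsub>UP R\<^esub> \<longrightarrow>
        (\<forall>i j. coeff (UP R) p i \<otimes>\<^bsub>R\<^esub> coeff (UP R) q j \<in> nil_set R))"

definition amalg :: "('a, 'm) ring_scheme \<Rightarrow> ('b, 'n) ring_scheme \<Rightarrow> ('a \<Rightarrow> 'b) \<Rightarrow> 'b set \<Rightarrow> ('a \<times> 'b) ring" where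
  "amalg A B f J = (RDirProd A B)
     \<lparr>carrier := {(a, f a \<oplus>\<^bsub>B\<^esub> j) | a j. a \<in> carrier A \<and> j \<in> J}\<rparr>"

end

theory Submission
  imports Defs "HOL-Algebra.Subrings"
begin

lemma up_map_closed:
  assumes R: "ring R" and S: "ring S" and h: "h \<in> ring_hom R S"
    and p: "p \<in> carrier (UP R)"
  shows "(\<lambda>n. h (p n)) \<in> carrier (UP S)"
proof -
  interpret H: ring_hom_ring R S h using ring_hom_ringI2[OF R S h] .
  from p obtain m where "bound \<zero>\<^bsub>R\<^esub> m p" and pc: "\<And>n. p n \<in> carrier R"
    by (auto simp: UP_def up_def)
  then have "bound \<zero>\<^bsub>S\<^esub> m (\<lambda>n. h (p n))" by auto
  then show ?thesis using pc by (auto simp: UP_def up_def)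
qed

lemma coeff_UP: "p \<in> carrier (UP R) \<Longrightarrow> coeff (UP R) p n = p n"
  by (simp add: UP_def)

lemma up_map_mult_zero:
  assumes R: "ring R" and S: "ring S" and h: "h \<in> ring_hom R S"
    and p: "p \<in> carrier (UP R)" and q: "q \<in> carrier (UP R)"
    and pq: "p \<otimes>\<^bsub>UP R\<^esub> q = \<zero>\<^bsub>UP R\<^esub>"
  shows "(\<lambda>n. h (p n)) \<otimes>\<^bsub>UP S\<^esub> (\<lambda>n. h (q n)) = \<zero>\<^bsub>UP S\<^esub>"
proof -
  interpret H: ring_hom_ring R S h using ring_hom_ringI2[OF R S h] .
  interpret PR: UP_ring R "UP R" by (unfold_locales) simp
  interpret PS: UP_ring S "UP S" by (unfold_locales) simp
  have hp: "(\<lambda>n. h (p n)) \<in> carrier (UP S)" by (rule up_map_closed[OF R S h p])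
  have hq: "(\<lambda>n. h (q n)) \<in> carrier (UP S)" by (rule up_map_closed[OF R S h q])
  have pc: "\<And>n. p n \<in> carrier R" and qc: "\<And>n. q n \<in> carrier R"
    using p q by (auto simp: UP_def up_def)
  show ?thesis
  proof (rule PS.up_eqI)
    fix n
    have "\<zero>\<^bsub>R\<^esub> = coeff (UP R) (p \<otimes>\<^bsub>UP R\<^esub> q) n" using pq by simp
    also have "\<dots> = (\<Oplus>\<^bsub>R\<^esub>i \<in> {..n}. p i \<otimes>\<^bsub>R\<^esub> q (n-i))"
      by (simp only: PR.coeff_mult[OF p q] coeff_UP[OF p] coeff_UP[OF q])
    finally have z: "(\<Oplus>\<^bsub>R\<^esub>i \<in> {..n}. p i \<otimes>\<^bsub>R\<^esub> q (n-i)) = \<zero>\<^bsub>R\<^esub>" by simp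
    have "coeff (UP S) ((\<lambda>n. h (p n)) \<otimes>\<^bsub>UP S\<^esub> (\<lambda>n. h (q n))) n
        = (\<Oplus>\<^bsub>S\<^esub>i \<in> {..n}. h (p i) \<otimes>\<^bsub>S\<^esub> h (q (n-i)))"
      by (simp only: PS.coeff_mult[OF hp hq] coeff_UP[OF hp] coeff_UP[OF hq])
    also have "\<dots> = (\<Oplus>\<^bsub>S\<^esub>i \<in> {..n}. h (p i \<otimes>\<^bsub>R\<^esub> q (n-i)))"
      using pc qc by simp
    also have "\<dots> = h (\<Oplus>\<^bsub>R\<^esub>i \<in> {..n}. p i \<otimes>\<^bsub>R\<^esub> q (n-i))"
      using pc qc by (subst H.hom_finsum) (auto simp: comp_def)
    also have "\<dots> = \<zero>\<^bsub>S\<^esub>" using z by simp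
    finally show "coeff (UP S) ((\<lambda>n. h (p n)) \<otimes>\<^bsub>UP S\<^esub> (\<lambda>n. h (q n))) n = coeff (UP S) \<zero>\<^bsub>UP S\<^esub> n"
      by simp
  qed (use hp hq in auto)
qed

lemma wa_transfer:
  assumes R: "ring R" and S: "ring S" and psi: "\<psi> \<in> ring_hom R S"
    and phi: "\<phi> \<in> ring_hom S R" and inv: "\<And>a. a \<in> carrier R \<Longrightarrow> \<phi> (\<psi> a) = a"
    and wa: "weak_armendariz S"
  shows "weak_armendariz R"
  unfolding weak_armendariz_def
proof (intro ballI impI allI)
  interpret H: ring_hom_ring R S \<psi> using ring_hom_ringI2[OF R S psi] .
  interpret G: ring_hom_ring S R \<phi> using ring_hom_ringI2[OF S R phi] .
  fix p q i j assume p: "p \<in> carrier (UP R)" and q: "q \<in> carrier (UP R)"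
    and pq: "p \<otimes>\<^bsub>UP R\<^esub> q = \<zero>\<^bsub>UP R\<^esub>"
  have pc: "\<And>n. p n \<in> carrier R" and qc: "\<And>n. q n \<in> carrier R"
    using p q by (auto simp: UP_def up_def)
  have hp: "(\<lambda>n. \<psi> (p n)) \<in> carrier (UP S)" by (rule up_map_closed[OF R S psi p])
  have hq: "(\<lambda>n. \<psi> (q n)) \<in> carrier (UP S)" by (rule up_map_closed[OF R S psi q])
  have "coeff (UP S) (\<lambda>n. \<psi> (p n)) i \<otimes>\<^bsub>S\<^esub> coeff (UP S) (\<lambda>n. \<psi> (q n)) j \<in> nil_set S"
    using wa hp hq up_map_mult_zero[OF R S psi p q pq] unfolding weak_armendariz_def by blast
  then have "\<psi> (p i \<otimes>\<^bsub>R\<^esub> q j) \<in> nil_set S" using hp hq pc qc by (simp add: coeff_UP)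
  then obtain n :: nat where "\<psi> (p i \<otimes>\<^bsub>R\<^esub> q j) [^]\<^bsub>S\<^esub> n = \<zero>\<^bsub>S\<^esub>" unfolding nil_set_def by blast
  then have "\<phi> (\<psi> (p i \<otimes>\<^bsub>R\<^esub> q j) [^]\<^bsub>S\<^esub> n) = \<zero>\<^bsub>R\<^esub>" by simp
  then have "(p i \<otimes>\<^bsub>R\<^esub> q j) [^]\<^bsub>R\<^esub> n = \<zero>\<^bsub>R\<^esub>"
    using pc qc by (simp add: G.hom_nat_pow inv)
  then show "coeff (UP R) p i \<otimes>\<^bsub>R\<^esub> coeff (UP R) q j \<in> nil_set R"
    using p q pc qc by (auto simp: coeff_UP nil_set_def)
qed

lemma RDP_simps:
  "carrier (RDirProd R S) = carrier R \<times> carrier S"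
  "(x, y) \<otimes>\<^bsub>RDirProd R S\<^esub> (x', y') = (x \<otimes>\<^bsub>R\<^esub> x', y \<otimes>\<^bsub>S\<^esub> y')"
  "(x, y) \<oplus>\<^bsub>RDirProd R S\<^esub> (x', y') = (x \<oplus>\<^bsub>R\<^esub> x', y \<oplus>\<^bsub>S\<^esub> y')"
  "\<one>\<^bsub>RDirProd R S\<^esub> = (\<one>\<^bsub>R\<^esub>, \<one>\<^bsub>S\<^esub>)"
  "\<zero>\<^bsub>RDirProd R S\<^esub> = (\<zero>\<^bsub>R\<^esub>, \<zero>\<^bsub>S\<^esub>)"
  by (simp_all add: RDirProd_def DirProd_def monoid.defs)

lemma amalg_subring:
  assumes A: "ring A" and B: "ring B" and f: "f \<in> ring_hom A B" and J: "ideal J B"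
  shows "subring {(a, f a \<oplus>\<^bsub>B\<^esub> j) | a j. a \<in> carrier A \<and> j \<in> J} (RDirProd A B)"
proof -
  interpret A: ring A by fact
  interpret B: ring B by fact
  interpret J: ideal J B by fact
  interpret H: ring_hom_ring A B f using ring_hom_ringI2[OF A B f] .
  interpret P: ring "RDirProd A B" using RDirProd_ring[OF A B] .
  have Jc: "\<And>j. j \<in> J \<Longrightarrow> j \<in> carrier B" using J.a_subset by blast
  show ?thesis
  proof (rule P.subringI)
    show "{(a, f a \<oplus>\<^bsub>B\<^esub> j) | a j. a \<in> carrier A \<and> j \<in> J} \<subseteq> carrier (RDirProd A B)"
      using Jc by (auto simp: RDP_simps)
    show "\<one>\<^bsub>RDirProd A B\<^esub> \<in> {(a, f a \<oplus>\<^bsub>B\<^esub> j) | a j. a \<in> carrier A \<and> j \<in> J}"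
      by (auto simp: RDP_simps intro!: exI[of _ "\<zero>\<^bsub>B\<^esub>"] J.zero_closed)
  next
    fix h assume "h \<in> {(a, f a \<oplus>\<^bsub>B\<^esub> j) | a j. a \<in> carrier A \<and> j \<in> J}"
    then obtain a j where h: "h = (a, f a \<oplus>\<^bsub>B\<^esub> j)" "a \<in> carrier A" "j \<in> J" by blast
    have "\<ominus>\<^bsub>RDirProd A B\<^esub> h = (\<ominus>\<^bsub>A\<^esub> a, \<ominus>\<^bsub>B\<^esub> (f a \<oplus>\<^bsub>B\<^esub> j))"
    proof (rule P.minus_equality)
      show "(\<ominus>\<^bsub>A\<^esub> a, \<ominus>\<^bsub>B\<^esub> (f a \<oplus>\<^bsub>B\<^esub> j)) \<oplus>\<^bsub>RDirProd A B\<^esub> h = \<zero>\<^bsub>RDirProd A B\<^esub>"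
        using h Jc by (simp add: RDP_simps A.l_neg B.l_neg)
    qed (use h Jc in \<open>auto simp: RDP_simps\<close>)
    also have "\<dots> = (\<ominus>\<^bsub>A\<^esub> a, f (\<ominus>\<^bsub>A\<^esub> a) \<oplus>\<^bsub>B\<^esub> \<ominus>\<^bsub>B\<^esub> j)"
      using h Jc by (simp add: B.minus_add H.hom_a_inv B.a_comm)
    finally show "\<ominus>\<^bsub>RDirProd A B\<^esub> h \<in> {(a, f a \<oplus>\<^bsub>B\<^esub> j) | a j. a \<in> carrier A \<and> j \<in> J}"
      using h J.a_inv_closed by blast
  next
    fix h1 h2 assume "h1 \<in> {(a, f a \<oplus>\<^bsub>B\<^esub> j) | a j. a \<in> carrier A \<and> j \<in> J}"
      "h2 \<in> {(a, f a \<oplus>\<^bsub>B\<^esub> j) | a j. a \<in> carrier A \<and> j \<in> J}"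
    then obtain a j a' j' where h: "h1 = (a, f a \<oplus>\<^bsub>B\<^esub> j)" "a \<in> carrier A" "j \<in> J"
      "h2 = (a', f a' \<oplus>\<^bsub>B\<^esub> j')" "a' \<in> carrier A" "j' \<in> J" by blast
    have c: "j \<in> carrier B" "j' \<in> carrier B" "f a \<in> carrier B" "f a' \<in> carrier B" using h Jc by auto
    have "h1 \<otimes>\<^bsub>RDirProd A B\<^esub> h2 = (a \<otimes>\<^bsub>A\<^esub> a', f (a \<otimes>\<^bsub>A\<^esub> a') \<oplus>\<^bsub>B\<^esub>
       ((f a \<otimes>\<^bsub>B\<^esub> j' \<oplus>\<^bsub>B\<^esub> j \<otimes>\<^bsub>B\<^esub> f a') \<oplus>\<^bsub>B\<^esub> j \<otimes>\<^bsub>B\<^esub> j'))"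
      using h c by (simp add: RDP_simps B.l_distr B.r_distr B.a_ac)
    moreover have "(f a \<otimes>\<^bsub>B\<^esub> j' \<oplus>\<^bsub>B\<^esub> j \<otimes>\<^bsub>B\<^esub> f a') \<oplus>\<^bsub>B\<^esub> j \<otimes>\<^bsub>B\<^esub> j' \<in> J"
      using h c by (intro J.a_closed J.I_l_closed J.I_r_closed) auto
    ultimately show "h1 \<otimes>\<^bsub>RDirProd A B\<^esub> h2 \<in> {(a, f a \<oplus>\<^bsub>B\<^esub> j) | a j. a \<in> carrier A \<and> j \<in> J}"
      using h by blast
    have "h1 \<oplus>\<^bsub>RDirProd A B\<^esub> h2 = (a \<oplus>\<^bsub>A\<^esub> a', f (a \<oplus>\<^bsub>A\<^esub> a') \<oplus>\<^bsub>B\<^esub> (j \<oplus>\<^bsub>B\<^esub> j'))"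
      using h c by (simp add: RDP_simps B.a_ac)
    then show "h1 \<oplus>\<^bsub>RDirProd A B\<^esub> h2 \<in> {(a, f a \<oplus>\<^bsub>B\<^esub> j) | a j. a \<in> carrier A \<and> j \<in> J}"
      using h J.a_closed by blast
  qed
qed

theorem theorem4p1:
  fixes A :: "('a, 'm) ring_scheme" and B :: "('b, 'n) ring_scheme"
  assumes "ring A" and "ring B"
    and "f \<in> ring_hom A B"
    and "ideal J B" and "J \<noteq> carrier B"
    and "J \<subseteq> nil_set B"
  shows "weak_armendariz (amalg A B f J) \<longleftrightarrow> weak_armendariz A"
proof -
  note A = assms(1) and B = assms(2) and f = assms(3) and J = assms(4)
  interpret A: ring A by fact
  interpret B: ring B by fact
  interpret JJ: ideal J B by fact
  interpret H: ring_hom_ring A B f using ring_hom_ringI2[OF A B f] .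
  interpret P: ring "RDirProd A B" using RDirProd_ring[OF A B] .
  define D where "D = amalg A B f J"
  have Jc: "\<And>j. j \<in> J \<Longrightarrow> j \<in> carrier B" using JJ.a_subset by blast
  have Dring: "ring D" unfolding D_def amalg_def
    by (rule P.subring_is_ring[OF amalg_subring[OF A B f J]])
  have cD: "carrier D = {(a, f a \<oplus>\<^bsub>B\<^esub> j) | a j. a \<in> carrier A \<and> j \<in> J}"
    by (simp add: D_def amalg_def)
  have mD: "\<And>x y x' y'. (x, y) \<otimes>\<^bsub>D\<^esub> (x', y') = (x \<otimes>\<^bsub>A\<^esub> x', y \<otimes>\<^bsub>B\<^esub> y')"
    by (simp add: D_def amalg_def RDP_simps)
  have aD: "\<And>x y x' y'. (x, y) \<oplus>\<^bsub>D\<^esub> (x', y') = (x \<oplus>\<^bsub>A\<^esub> x', y \<oplus>\<^bsub>B\<^esub> y')"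
    by (simp add: D_def amalg_def RDP_simps)
  have oD: "\<one>\<^bsub>D\<^esub> = (\<one>\<^bsub>A\<^esub>, \<one>\<^bsub>B\<^esub>)" by (simp add: D_def amalg_def RDP_simps)
  have zD: "\<zero>\<^bsub>D\<^esub> = (\<zero>\<^bsub>A\<^esub>, \<zero>\<^bsub>B\<^esub>)" by (simp add: D_def amalg_def RDP_simps)
  have cD': "\<And>x. x \<in> carrier D \<Longrightarrow> fst x \<in> carrier A \<and> snd x \<in> carrier B"
    using Jc by (auto simp: cD)
  have psi: "(\<lambda>a. (a, f a)) \<in> ring_hom A D"
  proof (rule ring_hom_memI)
    fix a assume a: "a \<in> carrier A"
    then have "(a, f a) = (a, f a \<oplus>\<^bsub>B\<^esub> \<zero>\<^bsub>B\<^esub>)" by simp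
    then show "(a, f a) \<in> carrier D" unfolding cD using a JJ.zero_closed by blast
  qed (auto simp: mD aD oD)
  have phi: "fst \<in> ring_hom D A"
    by (rule ring_hom_memI) (auto simp: mD aD oD cD')
  have sn: "snd \<in> ring_hom D B"
    by (rule ring_hom_memI) (auto simp: mD aD oD cD')
  interpret G: ring_hom_ring D A fst using ring_hom_ringI2[OF Dring A phi] .
  interpret K: ring_hom_ring D B snd using ring_hom_ringI2[OF Dring B sn] .
  show ?thesis unfolding D_def[symmetric]
  proof
    assume "weak_armendariz D"
    then show "weak_armendariz A" using wa_transfer[OF A Dring psi phi] by simp
  next
    assume wa: "weak_armendariz A"
    show "weak_armendariz D"
      unfolding weak_armendariz_def
    proof (intro ballI impI allI)
      fix p q i j assume p: "p \<in> carrier (UP D)" and q: "q \<in> carrier (UP D)"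
        and pq: "p \<otimes>\<^bsub>UP D\<^esub> q = \<zero>\<^bsub>UP D\<^esub>"
      have pc: "\<And>n. p n \<in> carrier D" and qc: "\<And>n. q n \<in> carrier D"
        using p q by (auto simp: UP_def up_def)
      have hp: "(\<lambda>n. fst (p n)) \<in> carrier (UP A)" by (rule up_map_closed[OF Dring A phi p])
      have hq: "(\<lambda>n. fst (q n)) \<in> carrier (UP A)" by (rule up_map_closed[OF Dring A phi q])
      have "coeff (UP A) (\<lambda>n. fst (p n)) i \<otimes>\<^bsub>A\<^esub> coeff (UP A) (\<lambda>n. fst (q n)) j \<in> nil_set A"
        using wa hp hq up_map_mult_zero[OF Dring A phi p q pq] unfolding weak_armendariz_def by blast
      then have "fst (p i \<otimes>\<^bsub>D\<^esub> q j) \<in> nil_set A" using hp hq pc qc by (simp add: coeff_UP)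
      then obtain n :: nat where n: "fst (p i \<otimes>\<^bsub>D\<^esub> q j) [^]\<^bsub>A\<^esub> n = \<zero>\<^bsub>A\<^esub>"
        unfolding nil_set_def by blast
      define z where "z = p i \<otimes>\<^bsub>D\<^esub> q j"
      have zc: "z \<in> carrier D" using pc qc Dring ring.ring_simprules(5) z_def by metis
      define w where "w = z [^]\<^bsub>D\<^esub> n"
      have wc: "w \<in> carrier D" using zc Dring w_def by (simp add: monoid.nat_pow_closed ring.axioms(2))
      have fw: "fst w = \<zero>\<^bsub>A\<^esub>" using n zc by (simp add: w_def z_def G.hom_nat_pow)
      from wc obtain a j' where w: "w = (a, f a \<oplus>\<^bsub>B\<^esub> j')" "a \<in> carrier A" "j' \<in> J"
        unfolding cD by blast
      have "a = \<zero>\<^bsub>A\<^esub>" using fw w by simp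
      then have sw: "snd w = j'" using w Jc by simp
      then have "snd w \<in> nil_set B" using assms(6) w by auto
      then obtain m :: nat where m: "snd w [^]\<^bsub>B\<^esub> m = \<zero>\<^bsub>B\<^esub>" unfolding nil_set_def by blast
      have m1: "snd w [^]\<^bsub>B\<^esub> Suc m = \<zero>\<^bsub>B\<^esub>" using m wc cD' by simp
      have "snd (w [^]\<^bsub>D\<^esub> Suc m) = \<zero>\<^bsub>B\<^esub>" using m1 wc by (simp add: K.hom_nat_pow)
      moreover have "fst (w [^]\<^bsub>D\<^esub> Suc m) = \<zero>\<^bsub>A\<^esub>" using fw wc by (simp add: G.hom_nat_pow)
      ultimately have "w [^]\<^bsub>D\<^esub> Suc m = \<zero>\<^bsub>D\<^esub>" unfolding zD by (simp add: prod_eq_iff)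
      moreover have "w [^]\<^bsub>D\<^esub> Suc m = z [^]\<^bsub>D\<^esub> (n * Suc m)"
        using zc Dring unfolding w_def by (rule_tac monoid.nat_pow_pow) (simp_all add: ring.axioms(2))
      ultimately have "z [^]\<^bsub>D\<^esub> (n * Suc m) = \<zero>\<^bsub>D\<^esub>" by simp
      then have "z \<in> nil_set D" using zc unfolding nil_set_def by blast
      then show "coeff (UP D) p i \<otimes>\<^bsub>D\<^esub> coeff (UP D) q j \<in> nil_set D"
        using p q by (simp add: coeff_UP z_def)
    qed
  qed
qed

end
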